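(* Let $\alpha\ge 0$, $\mu\ge 0$, $n\in\mathbb{N}$ and $x\in[0,\infty)$. Then $$\Delta_1:=T_n(t-x;x)=\frac{2\alpha x^2}{n},\qquad \Delta_2:=T_n((t-x)^2;x)=\frac{1}{n^2}x\left(4x^3\alpha^2+4\alpha x+n\right)+\frac{2\mu x}{n}\frac{e_\mu(-nx)}{e_\mu(nx)},$$ where $T_n$ acts on the variable $t$.
   Context: For $\mu>-\tfrac12$ define $\gamma_\mu(2k)=\dfrac{2^{2k}k!\,\Gamma(k+\mu+1/2)}{\Gamma(\mu+1/2)}$ and $\gamma_\mu(2k+1)=\dfrac{2^{2k+1}k!\,\Gamma(k+\mu+3/2)}{\Gamma(\mu+1/2)}$, $k\ge0$; $e_\mu(x)=\sum_{k\ge0} x^k/\gamma_\mu(k)$; $\theta_k=0$ if $k$ is even and $\theta_k=1$ if $k$ is odd. Let $h_k^\mu(\xi,\alpha)=\gamma_\mu(k)\sum_{j=0}^{\lfloor k/2\rfloor}\dfrac{\alpha^j\xi^{k-2j}}{j!\,\gamma_\mu(k-2j)}$. For $\alpha\ge0,\mu\ge0$, $n\in\mathbb{N}$ and $x\in[0,\infty)$ define $$T_n(f;x)=\frac{1}{e^{\alpha x^2}e_\mu(nx)}\sum_{k=0}^\infty \frac{h_k^\mu(n,\alpha)}{\gamma_\mu(k)}x^k f\!\left(\frac{k+2\mu\theta_k}{n}\right).$$ *)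

theory Defs
  imports "HOL-Analysis.Analysis"
begin

definition gamma_mu :: "real \<Rightarrow> nat \<Rightarrow> real" where
  "gamma_mu \<mu> k =
     (if even k
      then 2 ^ k * fact (k div 2) * Gamma (real (k div 2) + \<mu> + 1/2) / Gamma (\<mu> + 1/2)
      else 2 ^ k * fact (k div 2) * Gamma (real (k div 2) + \<mu> + 3/2) / Gamma (\<mu> + 1/2))"

definition e_mu :: "real \<Rightarrow> real \<Rightarrow> real" where
  "e_mu \<mu> x = (\<Sum>k. x ^ k / gamma_mu \<mu> k)"

definition theta :: "nat \<Rightarrow> real" where
  "theta k = (if even k then 0 else 1)"

definition h_mu :: "real \<Rightarrow> nat \<Rightarrow> real \<Rightarrow> real \<Rightarrow> real" where
  "h_mu \<mu> k \<xi> \<alpha> = gamma_mu \<mu> k *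
     (\<Sum>j\<le>k div 2. \<alpha> ^ j * \<xi> ^ (k - 2 * j) / (fact j * gamma_mu \<mu> (k - 2 * j)))"

definition T_op :: "real \<Rightarrow> real \<Rightarrow> nat \<Rightarrow> (real \<Rightarrow> real) \<Rightarrow> real \<Rightarrow> real" where
  "T_op \<mu> \<alpha> n f x =
     (1 / (exp (\<alpha> * x ^ 2) * e_mu \<mu> (real n * x))) *
     (\<Sum>k. h_mu \<mu> k (real n) \<alpha> / gamma_mu \<mu> k * x ^ k *
            f ((real k + 2 * \<mu> * theta k) / real n))"

end

theory Submission
  imports Defs
begin

definition MM :: "real \<Rightarrow> nat \<Rightarrow> real" where
  "MM \<mu> k = real k + 2 * \<mu> * theta k"

lemma Gamma_step: "(z::real) > 0 \<Longrightarrow> Gamma (z + 1) = z * Gamma z"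
  by (rule Gamma_plus1) (auto elim!: nonpos_Ints_cases)

lemma gamma_Suc:
  assumes "\<mu> \<ge> 0"
  shows "gamma_mu \<mu> (Suc m) = MM \<mu> (Suc m) * gamma_mu \<mu> m"
proof (cases "even m")
  case True
  then obtain q where m: "m = 2*q" by blast
  have g: "Gamma (\<mu> + (real q + 3/2)) = (\<mu> + (real q + 1/2)) * Gamma (\<mu> + (real q + 1/2))"
  proof -
    have e: "\<mu> + (real q + 3/2) = (\<mu> + (real q + 1/2)) + 1" by simp
    show ?thesis unfolding e by (rule Gamma_step) (use assms in simp)
  qed
  have sd: "Suc m div 2 = q" "m div 2 = q" using m by auto
  show ?thesis using m sd True by (simp add: gamma_mu_def MM_def theta_def g power_Suc algebra_simps)
next
  case False
  then obtain q where m: "m = 2*q+1" by (blast elim: oddE)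
  have sd: "Suc m div 2 = Suc q" "m div 2 = q" using m by auto
  have g: "Gamma (real (Suc q) + \<mu> + 1/2) = Gamma (real q + \<mu> + 3/2)"
    by (simp add: add_ac)
  show ?thesis using m sd g by (simp add: gamma_mu_def MM_def theta_def field_simps)
qed

lemma gamma_0: assumes "\<mu> \<ge> 0" shows "gamma_mu \<mu> 0 = 1"
proof -
  have "Gamma (\<mu> + 1/2) > 0" by (rule Gamma_real_pos) (use assms in simp)
  then show ?thesis by (simp add: gamma_mu_def)
qed

lemma gamma_ge_fact: "\<mu> \<ge> 0 \<Longrightarrow> gamma_mu \<mu> m \<ge> fact m"
proof (induction m)
  case 0 then show ?case by (simp add: gamma_0)
next
  case (Suc m)
  have "MM \<mu> (Suc m) \<ge> real (Suc m)" using Suc.prems by (simp add: MM_def theta_def)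
  then have "MM \<mu> (Suc m) * gamma_mu \<mu> m \<ge> real (Suc m) * fact m"
    using Suc by (intro mult_mono) auto
  then show ?case using gamma_Suc[OF Suc.prems] by (simp add: fact_Suc)
qed

lemma gamma_pos: "\<mu> \<ge> 0 \<Longrightarrow> gamma_mu \<mu> m > 0"
  using gamma_ge_fact[of \<mu> m] fact_gt_zero[where 'a=real, of m] by linarith

definition AA :: "real \<Rightarrow> nat \<Rightarrow> real" where
  "AA z i = (if even i then z ^ (i div 2) / fact (i div 2) else 0)"

lemma AA_sums: "AA z sums exp z"
proof -
  have sm: "strict_mono (\<lambda>j::nat. 2*j)" by (auto simp: strict_mono_def)
  have h: "(\<lambda>j. AA z (2*j)) sums exp z"
    using exp_converges[of z] by (simp add: AA_def divide_inverse mult.commute scaleR_conv_of_real)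
  have zero: "AA z n = 0" if "n \<notin> range (\<lambda>j::nat. 2*j)" for n
    using that by (auto simp: AA_def elim!: evenE)
  have eq: "(\<lambda>j. AA z (2*j)) sums exp z \<longleftrightarrow> AA z sums exp z"
    by (rule sums_mono_reindex[of "\<lambda>j::nat. 2*j" "AA z" "exp z", OF sm zero])
  show ?thesis using eq h by blast
qed

lemma AA_shift: "real (Suc (Suc i)) * AA z (Suc (Suc i)) = 2 * z * AA z i"
proof (cases "even i")
  case True
  then obtain j where i: "i = 2*j" by blast
  have d: "Suc (Suc i) div 2 = Suc j" "i div 2 = j" using i by auto
  have a1: "AA z (Suc (Suc i)) = z ^ Suc j / fact (Suc j)" "AA z i = z ^ j / fact j"
    using True d by (auto simp: AA_def)
  have r: "real (Suc (Suc i)) = 2 * real (Suc j)" using i by simp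
  have fj: "fact (Suc j) = real (Suc j) * (fact j :: real)" by (simp add: fact_Suc)
  have "2 * real (Suc j) * (z ^ Suc j / (real (Suc j) * fact j)) = 2 * z * (z ^ j / fact j)"
    by (simp del: of_nat_Suc)
  then show ?thesis unfolding a1 r fj by simp
next
  case False then show ?thesis by (simp add: AA_def)
qed

lemma my_sums_Suc: "(\<lambda>i. f (Suc i)) sums s \<Longrightarrow> f sums (s + f 0)"
  for f :: "nat \<Rightarrow> real"
  by (simp add: sums_Suc_iff)

lemma sums_SucSuc: "(\<lambda>i. f (Suc (Suc i))) sums s \<Longrightarrow> f sums (s + f 1 + f 0)"
  for f :: "nat \<Rightarrow> real"
proof -
  assume h: "(\<lambda>i. f (Suc (Suc i))) sums s"
  have "(\<lambda>i. f (Suc i)) sums (s + f 1)"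
    using my_sums_Suc[of "\<lambda>i. f (Suc i)", OF h] by simp
  then show ?thesis by (rule my_sums_Suc)
qed

lemma AA1_sums: "(\<lambda>i. real i * AA z i) sums (2 * z * exp z)"
proof -
  have "(\<lambda>i. real (Suc (Suc i)) * AA z (Suc (Suc i))) sums (2 * z * exp z)"
    unfolding AA_shift by (intro sums_mult AA_sums)
  from sums_SucSuc[of "\<lambda>i. real i * AA z i", OF this] show ?thesis by (simp add: AA_def)
qed

lemma AA2_sums: "(\<lambda>i. (real i)^2 * AA z i) sums (2 * z * (2 * z * exp z + 2 * exp z))"
proof -
  have e: "(real (Suc (Suc i)))^2 * AA z (Suc (Suc i)) = 2 * z * (real i * AA z i + 2 * AA z i)" for i
  proof -
    have "(real (Suc (Suc i)))^2 * AA z (Suc (Suc i)) = real (Suc (Suc i)) * (real (Suc (Suc i)) * AA z (Suc (Suc i)))"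
      by (simp only: power2_eq_square mult.assoc)
    also have "\<dots> = real (Suc (Suc i)) * (2 * z * AA z i)" by (simp only: AA_shift)
    also have "\<dots> = 2 * z * (real i * AA z i + 2 * AA z i)" by (simp add: algebra_simps)
    finally show ?thesis .
  qed
  have "(\<lambda>i. (real (Suc (Suc i)))^2 * AA z (Suc (Suc i))) sums (2 * z * (2 * z * exp z + 2 * exp z))"
    unfolding e by (intro sums_mult sums_add AA1_sums AA_sums)
  from sums_SucSuc[of "\<lambda>i. (real i)^2 * AA z i", OF this] show ?thesis by (simp add: AA_def)
qed

lemma AA_nonneg: "z \<ge> 0 \<Longrightarrow> AA z i \<ge> 0"
  by (simp add: AA_def)

definition BB :: "real \<Rightarrow> real \<Rightarrow> nat \<Rightarrow> real" where
  "BB \<mu> y m = y ^ m / gamma_mu \<mu> m"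

lemma BB_summable_norm: assumes "\<mu> \<ge> 0" shows "summable (\<lambda>m. norm (BB \<mu> y m))"
proof (rule summable_comparison_test)
  show "summable (\<lambda>m. inverse (fact m) * \<bar>y\<bar> ^ m)" by (rule summable_exp)
  show "\<exists>N. \<forall>m\<ge>N. norm (norm (BB \<mu> y m)) \<le> inverse (fact m) * \<bar>y\<bar> ^ m"
  proof (intro exI allI impI)
    fix m :: nat
    have "\<bar>y\<bar> ^ m / gamma_mu \<mu> m \<le> \<bar>y\<bar> ^ m / fact m"
      using gamma_ge_fact[OF assms, of m] gamma_pos[OF assms, of m] by (intro divide_left_mono) auto
    moreover have "norm (norm (BB \<mu> y m)) = \<bar>y\<bar> ^ m / gamma_mu \<mu> m"
      using gamma_pos[OF assms, of m] by (simp add: BB_def abs_divide power_abs)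
    ultimately show "norm (norm (BB \<mu> y m)) \<le> inverse (fact m) * \<bar>y\<bar> ^ m"
      by (simp add: divide_inverse mult.commute)
  qed
qed

lemma BB_sums: assumes "\<mu> \<ge> 0" shows "BB \<mu> y sums e_mu \<mu> y"
proof -
  have "summable (BB \<mu> y)" using BB_summable_norm[OF assms] by (rule summable_norm_cancel)
  then show ?thesis by (simp add: e_mu_def BB_def[abs_def] summable_sums)
qed

lemma MM0: "MM \<mu> 0 = 0" by (simp add: MM_def theta_def)

lemma MM_Suc_pos: "\<mu> \<ge> 0 \<Longrightarrow> MM \<mu> (Suc m) > 0"
  by (simp add: MM_def theta_def add_pos_nonneg)

lemma MB_shift: assumes "\<mu> \<ge> 0"
  shows "MM \<mu> (Suc m) * BB \<mu> y (Suc m) = y * BB \<mu> y m"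
  using gamma_Suc[OF assms, of m] MM_Suc_pos[OF assms, of m] gamma_pos[OF assms, of m]
  by (simp add: BB_def)

lemma MB_sums: assumes "\<mu> \<ge> 0"
  shows "(\<lambda>m. MM \<mu> m * BB \<mu> y m) sums (y * e_mu \<mu> y)"
proof -
  have "(\<lambda>m. MM \<mu> (Suc m) * BB \<mu> y (Suc m)) sums (y * e_mu \<mu> y)"
    unfolding MB_shift[OF assms] by (rule sums_mult) (rule BB_sums[OF assms])
  from my_sums_Suc[OF this] show ?thesis by (simp add: MM0)
qed

lemma MM_Suc: "MM \<mu> (Suc m) = MM \<mu> m + 1 + 2 * \<mu> * (-1) ^ m"
  by (simp add: MM_def theta_def)

lemma BB_neg: "BB \<mu> (-y) m = (-1) ^ m * BB \<mu> y m"
  unfolding BB_def power_minus[of y m] by simp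

lemma M2B_sums: assumes "\<mu> \<ge> 0"
  shows "(\<lambda>m. (MM \<mu> m)^2 * BB \<mu> y m) sums
     (y * (y * e_mu \<mu> y + e_mu \<mu> y + 2 * \<mu> * e_mu \<mu> (-y)))"
proof -
  have e: "(MM \<mu> (Suc m))^2 * BB \<mu> y (Suc m) =
      y * (MM \<mu> m * BB \<mu> y m + BB \<mu> y m + 2 * \<mu> * BB \<mu> (-y) m)" for m
  proof -
    have "(MM \<mu> (Suc m))^2 * BB \<mu> y (Suc m) = MM \<mu> (Suc m) * (y * BB \<mu> y m)"
      using MB_shift[OF assms, of m y] by (simp add: power2_eq_square)
    also have "\<dots> = y * (MM \<mu> m * BB \<mu> y m + BB \<mu> y m + 2 * \<mu> * BB \<mu> (-y) m)"
      unfolding MM_Suc BB_neg by (simp add: algebra_simps)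
    finally show ?thesis .
  qed
  have "(\<lambda>m. (MM \<mu> (Suc m))^2 * BB \<mu> y (Suc m)) sums
     (y * (y * e_mu \<mu> y + e_mu \<mu> y + 2 * \<mu> * e_mu \<mu> (-y)))"
  proof -
    have s3: "(\<lambda>m. 2 * \<mu> * BB \<mu> (-y) m) sums (2 * \<mu> * e_mu \<mu> (-y))"
      by (rule sums_mult) (rule BB_sums[OF assms])
    have "(\<lambda>m. MM \<mu> m * BB \<mu> y m + BB \<mu> y m) sums (y * e_mu \<mu> y + e_mu \<mu> y)"
      by (rule sums_add[OF MB_sums[OF assms] BB_sums[OF assms]])
    then have "(\<lambda>m. MM \<mu> m * BB \<mu> y m + BB \<mu> y m + 2 * \<mu> * BB \<mu> (-y) m) sums
        (y * e_mu \<mu> y + e_mu \<mu> y + 2 * \<mu> * e_mu \<mu> (-y))"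
      by (rule sums_add[OF _ s3])
    then have "(\<lambda>m. y * (MM \<mu> m * BB \<mu> y m + BB \<mu> y m + 2 * \<mu> * BB \<mu> (-y) m)) sums
        (y * (y * e_mu \<mu> y + e_mu \<mu> y + 2 * \<mu> * e_mu \<mu> (-y)))"
      by (rule sums_mult)
    then show ?thesis unfolding e .
  qed
  from my_sums_Suc[OF this] show ?thesis by (simp add: MM0)
qed

lemma nonneg_norm_summable:
  fixes f :: "nat \<Rightarrow> real"
  assumes "\<And>k. f k \<ge> 0" "f sums s" shows "summable (\<lambda>k. norm (f k))"
proof -
  have "summable f" using assms(2) by (rule sums_summable)
  moreover have "norm (f k) = f k" for k using assms(1)[of k] by simp
  ultimately show ?thesis by simp
qed


lemma sum_even_reindex:
  fixes g :: "nat \<Rightarrow> real"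
  shows "(\<Sum>i\<le>k. if even i then g i else 0) = (\<Sum>j\<le>k div 2. g (2*j))"
proof -
  have img: "(\<lambda>j. 2*j) ` {..k div 2} = {i\<in>{..k}. even i}"
  proof (intro equalityI subsetI)
    fix i assume "i \<in> (\<lambda>j. 2*j) ` {..k div 2}"
    then obtain j where "j \<le> k div 2" "i = 2*j" by auto
    then show "i \<in> {i\<in>{..k}. even i}" by auto
  next
    fix i assume "i \<in> {i\<in>{..k}. even i}"
    then have "i \<le> k" "even i" by auto
    then obtain j where j: "i = 2*j" by (auto elim!: evenE)
    with \<open>i \<le> k\<close> have "j \<le> k div 2" by auto
    with j show "i \<in> (\<lambda>j. 2*j) ` {..k div 2}" by auto
  qed
  have inj: "inj_on (\<lambda>j::nat. 2*j) {..k div 2}" by (auto simp: inj_on_def)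
  have "(\<Sum>i\<le>k. if even i then g i else 0) = sum g {i\<in>{..k}. even i}"
    by (rule sum.inter_filter[symmetric]) simp
  also have "\<dots> = sum g ((\<lambda>j. 2*j) ` {..k div 2})" by (simp only: img)
  also have "\<dots> = (\<Sum>j\<le>k div 2. g (2*j))" by (simp add: sum.reindex[OF inj])
  finally show ?thesis .
qed

lemma conv:
  assumes "\<mu> \<ge> 0"
  shows "h_mu \<mu> k (real n) \<alpha> / gamma_mu \<mu> k * x ^ k =
     (\<Sum>i\<le>k. AA (\<alpha> * x^2) i * BB \<mu> (real n * x) (k - i))"
proof -
  have gk: "gamma_mu \<mu> k \<noteq> 0" using gamma_pos[OF assms] by (simp add: less_imp_neq[symmetric])
  have "h_mu \<mu> k (real n) \<alpha> / gamma_mu \<mu> k * x ^ k =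
      (\<Sum>j\<le>k div 2. \<alpha> ^ j * real n ^ (k - 2 * j) / (fact j * gamma_mu \<mu> (k - 2 * j))) * x ^ k"
    using gk by (simp add: h_mu_def)
  also have "\<dots> = (\<Sum>j\<le>k div 2. AA (\<alpha> * x^2) (2*j) * BB \<mu> (real n * x) (k - 2*j))"
    unfolding sum_distrib_right
  proof (rule sum.cong[OF refl])
    fix j assume "j \<in> {..k div 2}"
    then have jk: "2*j \<le> k" by auto
    have xk: "x ^ k = x ^ (2*j) * x ^ (k - 2*j)" using jk by (simp add: power_add[symmetric])
    show "\<alpha> ^ j * real n ^ (k - 2 * j) / (fact j * gamma_mu \<mu> (k - 2 * j)) * x ^ k =
        AA (\<alpha> * x^2) (2*j) * BB \<mu> (real n * x) (k - 2*j)"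
      unfolding xk by (simp add: AA_def BB_def power_mult_distrib power_mult)
  qed
  also have "\<dots> = (\<Sum>i\<le>k. if even i then AA (\<alpha> * x^2) i * BB \<mu> (real n * x) (k - i) else 0)"
    by (rule sum_even_reindex[symmetric])
  also have "\<dots> = (\<Sum>i\<le>k. AA (\<alpha> * x^2) i * BB \<mu> (real n * x) (k - i))"
    by (rule sum.cong) (auto simp: AA_def)
  finally show ?thesis .
qed

lemma cauchy_sums:
  fixes f g :: "nat \<Rightarrow> real"
  assumes "f sums F" "g sums G" "\<And>i. f i \<ge> 0" "\<And>i. g i \<ge> 0"
  shows "(\<lambda>k. \<Sum>i\<le>k. f i * g (k - i)) sums (F * G)"
proof -
  have "(\<lambda>k. \<Sum>i\<le>k. f i * g (k - i)) sums ((\<Sum>k. f k) * (\<Sum>k. g k))"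
    by (rule Cauchy_product_sums[OF nonneg_norm_summable[OF assms(3,1)] nonneg_norm_summable[OF assms(4,2)]])
  then show ?thesis using assms(1,2) by (simp add: sums_iff)
qed

lemma MM_split:
  assumes "even i" "i \<le> k"
  shows "MM \<mu> k = real i + MM \<mu> (k - i)"
proof -
  have "even (k - i) \<longleftrightarrow> even k" using assms by auto
  then show ?thesis using assms by (simp add: MM_def theta_def of_nat_diff)
qed


lemma MM_nonneg: "\<mu> \<ge> 0 \<Longrightarrow> MM \<mu> k \<ge> 0"
  by (simp add: MM_def theta_def)

lemma BB_nonneg: "\<mu> \<ge> 0 \<Longrightarrow> y \<ge> 0 \<Longrightarrow> BB \<mu> y k \<ge> 0"
  using gamma_pos[of \<mu> k] by (simp add: BB_def)

theorem lemma4: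
  fixes \<alpha> \<mu> x :: real and n :: nat
  assumes "\<alpha> \<ge> 0" and "\<mu> \<ge> 0" and "n \<ge> 1" and "x \<ge> 0"
  shows "T_op \<mu> \<alpha> n (\<lambda>t. t - x) x= 2 * \<alpha> * x ^ 2 / real n \<and>
         T_op \<mu> \<alpha> n (\<lambda>t. (t - x) ^ 2) x =
           x * (4 * x ^ 3 * \<alpha> ^ 2 + 4 * \<alpha> * x + real n) / (real n) ^ 2
           + (2 * \<mu> * x / real n) * (e_mu \<mu> (- (real n * x)) / e_mu \<mu> (real n * x))"
proof -
  note mu = assms(2)
  define z where "z = \<alpha> * x^2"
  define y where "y = real n * x"
  define P where "P = exp z"
  define E where "E = e_mu \<mu> y"
  define E' where "E' = e_mu \<mu> (-y)"
  define a where "a k = h_mu \<mu> k (real n) \<alpha> / gamma_mu \<mu> k * x ^ k" for k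
  have z0: "z \<ge> 0" using assms by (simp add: z_def)
  have y0: "y \<ge> 0" using assms by (simp add: y_def)
  have n0: "real n > 0" using assms by simp
  have P0: "P > 0" by (simp add: P_def)
  have a_eq: "a k = (\<Sum>i\<le>k. AA z i * BB \<mu> y (k - i))" for k
    unfolding a_def z_def y_def by (rule conv[OF mu])
  have BBs: "BB \<mu> y sums E" unfolding E_def by (rule BB_sums[OF mu])
  have E1: "E \<ge> 1"
  proof -
    have "sum (BB \<mu> y) {..<1} \<le> suminf (BB \<mu> y)"
      by (rule sum_le_suminf) (use BBs BB_nonneg[OF mu y0] in \<open>auto simp: sums_iff\<close>)
    then show ?thesis using BBs gamma_0[OF mu] by (simp add: sums_iff BB_def)
  qed
  have Ann: "AA z i \<ge> 0" for i using AA_nonneg[OF z0] .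
  have Bnn: "BB \<mu> y i \<ge> 0" for i using BB_nonneg[OF mu y0] .
  have Mnn: "MM \<mu> i \<ge> 0" for i using MM_nonneg[OF mu] .
  have C00: "(\<lambda>k. \<Sum>i\<le>k. AA z i * BB \<mu> y (k - i)) sums (P * E)"
    unfolding P_def by (rule cauchy_sums[OF AA_sums BBs Ann Bnn])
  have C10: "(\<lambda>k. \<Sum>i\<le>k. (real i * AA z i) * BB \<mu> y (k - i)) sums ((2*z*P) * E)"
    unfolding P_def by (rule cauchy_sums[OF AA1_sums BBs]) (use Ann Bnn in simp_all)
  have C01: "(\<lambda>k. \<Sum>i\<le>k. AA z i * (MM \<mu> (k-i) * BB \<mu> y (k - i))) sums (P * (y * E))"
    unfolding P_def E_def by (rule cauchy_sums[OF AA_sums MB_sums[OF mu]]) (use Ann Bnn Mnn in simp_all)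
  have C20: "(\<lambda>k. \<Sum>i\<le>k. ((real i)^2 * AA z i) * BB \<mu> y (k - i)) sums ((2 * z * (2 * z * P + 2 * P)) * E)"
    unfolding P_def by (rule cauchy_sums[OF AA2_sums BBs]) (use Ann Bnn in simp_all)
  have C11: "(\<lambda>k. \<Sum>i\<le>k. (real i * AA z i) * (MM \<mu> (k-i) * BB \<mu> y (k - i))) sums ((2*z*P) * (y * E))"
    unfolding P_def E_def by (rule cauchy_sums[OF AA1_sums MB_sums[OF mu]]) (use Ann Bnn Mnn in simp_all)
  have C02: "(\<lambda>k. \<Sum>i\<le>k. AA z i * ((MM \<mu> (k-i))^2 * BB \<mu> y (k - i))) sums
      (P * (y * (y * E + E + 2 * \<mu> * E')))"
    unfolding P_def E_def E'_def by (rule cauchy_sums[OF AA_sums M2B_sums[OF mu]]) (use Ann Bnn Mnn in simp_all)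
  have a_fun: "a = (\<lambda>k. \<Sum>i\<le>k. AA z i * BB \<mu> y (k - i))" by (rule ext) (rule a_eq)
  have S0: "a sums (P * E)" using C00 unfolding a_fun .
  have term1: "AA z i * BB \<mu> y (k - i) * MM \<mu> k =
      (real i * AA z i) * BB \<mu> y (k - i) + AA z i * (MM \<mu> (k-i) * BB \<mu> y (k - i))"
    if "i \<le> k" for i k
  proof (cases "even i")
    case True
    then show ?thesis using MM_split[OF True that, of \<mu>] by (simp add: algebra_simps)
  next
    case False then show ?thesis by (simp add: AA_def)
  qed
  have term2: "AA z i * BB \<mu> y (k - i) * (MM \<mu> k)^2 =
      ((real i)^2 * AA z i) * BB \<mu> y (k - i)
      + 2 * ((real i * AA z i) * (MM \<mu> (k-i) * BB \<mu> y (k - i)))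
      + AA z i * ((MM \<mu> (k-i))^2 * BB \<mu> y (k - i))"
    if "i \<le> k" for i k
  proof (cases "even i")
    case True
    then show ?thesis using MM_split[OF True that, of \<mu>] by (simp add: algebra_simps power2_eq_square)
  next
    case False then show ?thesis by (simp add: AA_def)
  qed
  have S1: "(\<lambda>k. a k * MM \<mu> k) sums ((2*z*P) * E + P * (y * E))"
  proof -
    have "(\<lambda>k. a k * MM \<mu> k) = (\<lambda>k. (\<Sum>i\<le>k. (real i * AA z i) * BB \<mu> y (k - i))
        + (\<Sum>i\<le>k. AA z i * (MM \<mu> (k-i) * BB \<mu> y (k - i))))"
      by (rule ext) (simp add: a_eq sum_distrib_right sum.distrib[symmetric] term1)
    then show ?thesis using sums_add[OF C10 C01] by simp
  qed
  have S2: "(\<lambda>k. a k * (MM \<mu> k)^2) sums ((2 * z * (2 * z * P + 2 * P)) * E + 2 * ((2*z*P) * (y * E))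
      + P * (y * (y * E + E + 2 * \<mu> * E')))"
  proof -
    have "(\<lambda>k. a k * (MM \<mu> k)^2) = (\<lambda>k. (\<Sum>i\<le>k. ((real i)^2 * AA z i) * BB \<mu> y (k - i))
        + 2 * (\<Sum>i\<le>k. (real i * AA z i) * (MM \<mu> (k-i) * BB \<mu> y (k - i)))
        + (\<Sum>i\<le>k. AA z i * ((MM \<mu> (k-i))^2 * BB \<mu> y (k - i))))"
      by (rule ext) (simp add: a_eq sum_distrib_right sum_distrib_left sum.distrib[symmetric] term2)
    then show ?thesis using sums_add[OF sums_add[OF C20 sums_mult[OF C11, of 2]] C02] by simp
  qed
  have Tsum: "T_op \<mu> \<alpha> n f x = 1 / (P * E) * (\<Sum>k. a k * f (MM \<mu> k / real n))" for f
    by (simp add: T_op_def a_def MM_def P_def E_def z_def y_def)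
  have R1: "(\<lambda>k. a k * (MM \<mu> k / real n - x)) sums (((2*z*P) * E + P * (y * E)) / real n - x * (P * E))"
  proof -
    have "(\<lambda>k. a k * (MM \<mu> k / real n - x)) = (\<lambda>k. a k * MM \<mu> k / real n - x * a k)"
      by (rule ext) (simp add: algebra_simps)
    then show ?thesis using sums_diff[OF sums_divide[OF S1, of "real n"] sums_mult[OF S0, of x]] by simp
  qed
  have R2: "(\<lambda>k. a k * (MM \<mu> k / real n - x)^2) sums
     (((2 * z * (2 * z * P + 2 * P)) * E + 2 * ((2*z*P) * (y * E))
      + P * (y * (y * E + E + 2 * \<mu> * E'))) / (real n)^2
      - 2 * x * (((2*z*P) * E + P * (y * E)) / real n) + x^2 * (P * E))"
  proof -
    have "(\<lambda>k. a k * (MM \<mu> k / real n - x)^2) =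
       (\<lambda>k. a k * (MM \<mu> k)^2 / (real n)^2 - 2 * x * (a k * MM \<mu> k / real n) + x^2 * a k)"
      by (rule ext) (simp add: algebra_simps power2_eq_square)
    then show ?thesis
      using sums_add[OF sums_diff[OF sums_divide[OF S2, of "(real n)^2"] sums_mult[OF sums_divide[OF S1, of "real n"], of "2*x"]] sums_mult[OF S0, of "x^2"]]
      by simp
  qed
  have EP: "P * E > 0" using P0 E1 by simp
  have PE: "P \<noteq> 0" "E \<noteq> 0" using P0 E1 by auto
  note v1 = sums_unique[OF R1, symmetric]
  note v2 = sums_unique[OF R2, symmetric]
  have "T_op \<mu> \<alpha> n (\<lambda>t. t - x) x = 1 / (P * E) *
     ((((2*z*P) * E + P * (y * E)) / real n - x * (P * E)))"
    using Tsum[of "\<lambda>t. t - x"] v1 by simp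
  also have "\<dots> = 2 * \<alpha> * x ^ 2 / real n"
    using PE n0 by (simp add: y_def z_def field_simps)
  finally have r1: "T_op \<mu> \<alpha> n (\<lambda>t. t - x) x = 2 * \<alpha> * x ^ 2 / real n" .
  have "T_op \<mu> \<alpha> n (\<lambda>t. (t - x) ^ 2) x = 1 / (P * E) *
     (((2 * z * (2 * z * P + 2 * P)) * E + 2 * ((2*z*P) * (y * E))
      + P * (y * (y * E + E + 2 * \<mu> * E'))) / (real n)^2
      - 2 * x * (((2*z*P) * E + P * (y * E)) / real n) + x^2 * (P * E))"
    using Tsum[of "\<lambda>t. (t - x) ^ 2"] v2 by simp
  also have "\<dots> = x * (4 * x ^ 3 * \<alpha> ^ 2 + 4 * \<alpha> * x + real n) / (real n) ^ 2
           + (2 * \<mu> * x / real n) * (E' / E)"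
    using PE n0 by (simp add: y_def z_def field_simps power2_eq_square power3_eq_cube)
  finally have r2: "T_op \<mu> \<alpha> n (\<lambda>t. (t - x) ^ 2) x =
           x * (4 * x ^ 3 * \<alpha> ^ 2 + 4 * \<alpha> * x + real n) / (real n) ^ 2
           + (2 * \<mu> * x / real n) * (e_mu \<mu> (- (real n * x)) / e_mu \<mu> (real n * x))"
    by (simp add: E_def E'_def y_def)
  from r1 r2
  show ?thesis ..
qed

end
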